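(* Let $\alpha\in(0,1)$ and suppose there exist $b_\alpha>0$ and $M_\alpha\ge\max_{F,G\in\mathcal D^\Delta}\|F-G\|$ such that for all $F\in\mathcal D^\Delta$, $|F(\mathrm{VaR}_\alpha(F)+b_\alpha y)-\alpha|\ge|y|$ for all $y\in[-M_\alpha,M_\alpha]$. Then for every $F\in\mathcal D^\Delta$ and every distribution function $G$ on $\mathbb R$ with $\|F-G\|_\infty<M_\alpha$, $$|\mathrm{VaR}_\alpha(F)-\mathrm{VaR}_\alpha(G)|\le b_\alpha\|F-G\|_\infty.$$
   Context: Let $F^{(1)},\dots,F^{(K)}$ be distribution functions on $\mathbb R$, $\Delta_{K-1}$ the probability simplex in $\mathbb R^K$ and $\mathcal D^\Delta=\{\sum_ip_iF^{(i)}:p\in\Delta_{K-1}\}$. $\|F\|_\infty=\sup_x|F(x)|$ and $\|F\|=\max\{\|F\|_\infty,|\int_{-\infty}^0x\,dF(x)|,|\int_0^\infty x\,dF(x)|\}$ (Lebesgue–Stieltjes integrals). $\mathrm{VaR}_\alpha(F)=\inf\{y\in\mathbb R:F(y)\ge\alpha\}$. *)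

theory Defs
  imports "HOL-Analysis.Analysis"
begin

definition is_dist_fun :: "(real \<Rightarrow> real) \<Rightarrow> bool" where
  "is_dist_fun F \<longleftrightarrow> mono F \<and> (\<forall>x. continuous (at_right x) F)
     \<and> (F \<longlongrightarrow> 0) at_bot \<and> (F \<longlongrightarrow> 1) at_top"

definition prob_simplex :: "nat \<Rightarrow> (nat \<Rightarrow> real) set" where
  "prob_simplex K = {p. (\<forall>i<K. 0 \<le> p i) \<and> (\<Sum>i<K. p i) = 1}"

definition mixtures :: "nat \<Rightarrow> (nat \<Rightarrow> real \<Rightarrow> real) \<Rightarrow> (real \<Rightarrow> real) set" where
  "mixtures K Fs = {(\<lambda>x. \<Sum>i<K. p i * Fs i x) | p. p \<in> prob_simplex K}"

definition sup_norm :: "(real \<Rightarrow> real) \<Rightarrow> real" where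
  "sup_norm F = (SUP x. \<bar>F x\<bar>)"

definition ls_neg :: "(real \<Rightarrow> real) \<Rightarrow> real" where
  "ls_neg F = set_lebesgue_integral (interval_measure F) {..0} (\<lambda>x. x)"

definition ls_pos :: "(real \<Rightarrow> real) \<Rightarrow> real" where
  "ls_pos F = set_lebesgue_integral (interval_measure F) {0..} (\<lambda>x. x)"

text \<open>The norm ||F - G|| for distribution functions F, G (the integral w.r.t.
  F - G is the difference of the integrals w.r.t. F and G).\<close>
definition diff_norm :: "(real \<Rightarrow> real) \<Rightarrow> (real \<Rightarrow> real) \<Rightarrow> real" where
  "diff_norm F G = max (sup_norm (\<lambda>x. F x - G x))
      (max \<bar>ls_neg F - ls_neg G\<bar> \<bar>ls_pos F - ls_pos G\<bar>)"

definition VaR :: "real \<Rightarrow> (real \<Rightarrow> real) \<Rightarrow> real" where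
  "VaR \<alpha> F = Inf {y. \<alpha> \<le> F y}"

end

theory Submission
  imports Defs
begin

lemma dist_range:
  assumes "is_dist_fun F" shows "0 \<le> F x \<and> F x \<le> 1"
proof -
  have m: "mono F" and t1: "(F \<longlongrightarrow> 1) at_top" and t0: "(F \<longlongrightarrow> 0) at_bot"
    using assms unfolding is_dist_fun_def by auto
  have "F x \<le> 1"
    by (rule tendsto_lowerbound[OF t1]) (auto simp: eventually_at_top_linorder intro!: exI[of _ x] monoD[OF m])
  moreover have "0 \<le> F x"
    by (rule tendsto_upperbound[OF t0]) (auto simp: eventually_at_bot_linorder intro!: exI[of _ x] monoD[OF m])
  ultimately show ?thesis by simp
qed

lemma var_props:
  assumes "is_dist_fun F" "0 < \<alpha>" "\<alpha> < 1"
  shows "\<alpha> \<le> F (VaR \<alpha> F)" "\<And>z. z < VaR \<alpha> F \<Longrightarrow> F z < \<alpha>"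
        "\<And>z. \<alpha> \<le> F z \<Longrightarrow> VaR \<alpha> F \<le> z"
proof -
  have m: "mono F" and t1: "(F \<longlongrightarrow> 1) at_top" and t0: "(F \<longlongrightarrow> 0) at_bot"
    and rc: "\<And>x. continuous (at_right x) F"
    using assms unfolding is_dist_fun_def by auto
  define S where "S = {y. \<alpha> \<le> F y}"
  have "eventually (\<lambda>y. \<alpha> < F y) at_top" using order_tendstoD(1)[OF t1] assms by auto
  then obtain N where N: "\<And>y. y \<ge> N \<Longrightarrow> \<alpha> < F y" by (auto simp: eventually_at_top_linorder)
  have "N \<in> S" using N[of N] unfolding S_def by simp
  hence ne: "S \<noteq> {}" by blast
  have "eventually (\<lambda>y. F y < \<alpha>) at_bot" using order_tendstoD(2)[OF t0] assms by auto
  then obtain L where L: "\<And>y. y \<le> L \<Longrightarrow> F y < \<alpha>" by (auto simp: eventually_at_bot_linorder)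
  have "L \<le> s" if "s \<in> S" for s
  proof (rule ccontr)
    assume "\<not> L \<le> s" hence "F s < \<alpha>" using L[of s] by simp
    thus False using that unfolding S_def by simp
  qed
  hence bb: "bdd_below S" unfolding bdd_below_def by blast
  have V: "VaR \<alpha> F = Inf S" unfolding VaR_def S_def ..
  show low: "\<And>z. \<alpha> \<le> F z \<Longrightarrow> VaR \<alpha> F \<le> z"
    unfolding V by (rule cInf_lower[OF _ bb]) (simp add: S_def)
  show "\<And>z. z < VaR \<alpha> F \<Longrightarrow> F z < \<alpha>"
    using low by (meson linorder_not_le)
  have "eventually (\<lambda>x. \<alpha> \<le> F x) (at_right (VaR \<alpha> F))"
  proof -
    have "\<alpha> \<le> F x" if xg: "x > VaR \<alpha> F" for x
    proof -
      obtain s where "s \<in> S" "s < x" using cInf_lessD[OF ne] xg V by auto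
      thus ?thesis using monoD[OF m, of s x] unfolding S_def by auto
    qed
    hence "\<forall>y>VaR \<alpha> F. y < VaR \<alpha> F + 1 \<longrightarrow> \<alpha> \<le> F y" by blast
    thus ?thesis unfolding eventually_at_right[of "VaR \<alpha> F" "VaR \<alpha> F + 1", OF less_add_one]
      by (intro exI[of _ "VaR \<alpha> F + 1"]) simp
  qed
  moreover have "(F \<longlongrightarrow> F (VaR \<alpha> F)) (at_right (VaR \<alpha> F))"
    using rc[of "VaR \<alpha> F"] by (simp add: continuous_within)
  ultimately show "\<alpha> \<le> F (VaR \<alpha> F)"
    by (intro tendsto_lowerbound) auto
qed

lemma mixture_dist:
  assumes "\<And>i. i < K \<Longrightarrow> is_dist_fun (Fs i)" "F \<in> mixtures K Fs"
  shows "is_dist_fun F"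
proof -
  obtain p where p: "p \<in> prob_simplex K" and F: "F = (\<lambda>x. \<Sum>i<K. p i * Fs i x)"
    using assms(2) unfolding mixtures_def by auto
  have p0: "\<And>i. i < K \<Longrightarrow> 0 \<le> p i" and p1: "(\<Sum>i<K. p i) = 1"
    using p unfolding prob_simplex_def by auto
  have "mono F" unfolding F mono_def
    using assms(1) p0 by (auto intro!: sum_mono mult_left_mono simp: is_dist_fun_def mono_def)
  moreover have "continuous (at_right x) F" for x unfolding F
    using assms(1) by (auto intro!: continuous_sum continuous_mult simp: is_dist_fun_def)
  moreover have "(F \<longlongrightarrow> 0) at_bot"
  proof -
    have "((\<lambda>x. \<Sum>i<K. p i * Fs i x) \<longlongrightarrow> (\<Sum>i<K. p i * 0)) at_bot"
      by (intro tendsto_sum tendsto_mult tendsto_const) (use assms(1) in \<open>auto simp: is_dist_fun_def\<close>)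
    thus ?thesis unfolding F by simp
  qed
  moreover have "(F \<longlongrightarrow> 1) at_top"
  proof -
    have "((\<lambda>x. \<Sum>i<K. p i * Fs i x) \<longlongrightarrow> (\<Sum>i<K. p i * 1)) at_top"
      by (intro tendsto_sum tendsto_mult tendsto_const) (use assms(1) in \<open>auto simp: is_dist_fun_def\<close>)
    thus ?thesis unfolding F using p1 by simp
  qed
  ultimately show ?thesis unfolding is_dist_fun_def by auto
qed

theorem lemma31:
  fixes K :: nat and Fs :: "nat \<Rightarrow> real \<Rightarrow> real"
    and \<alpha> b M :: real
  assumes dist: "\<And>i. i < K \<Longrightarrow> is_dist_fun (Fs i)"
    and alpha: "0 < \<alpha>" "\<alpha> < 1"
    and b: "0 < b"
    and M: "\<forall>F\<in>mixtures K Fs. \<forall>G\<in>mixtures K Fs. diff_norm F G \<le> M"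
    and growth: "\<forall>F\<in>mixtures K Fs. \<forall>y. -M \<le> y \<and> y \<le> M \<longrightarrow>
                    \<bar>F (VaR \<alpha> F + b * y) - \<alpha>\<bar> \<ge> \<bar>y\<bar>"
  shows "\<forall>F\<in>mixtures K Fs. \<forall>G. is_dist_fun G \<and> sup_norm (\<lambda>x. F x - G x) < M \<longrightarrow>
           \<bar>VaR \<alpha> F - VaR \<alpha> G\<bar> \<le> b * sup_norm (\<lambda>x. F x - G x)"
proof (intro ballI allI impI)
  fix F G assume FM: "F \<in> mixtures K Fs" and GG: "is_dist_fun G \<and> sup_norm (\<lambda>x. F x - G x) < M"
  define e where "e = sup_norm (\<lambda>x. F x - G x)"
  have DF: "is_dist_fun F" using mixture_dist[OF dist FM] by auto
  have DG: "is_dist_fun G" and eM: "e < M" using GG e_def by auto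
  have bdd: "bdd_above (range (\<lambda>x. \<bar>F x - G x\<bar>))"
    proof -
    have "\<And>x. \<bar>F x - G x\<bar> \<le> 1" subgoal for x using dist_range[OF DF, of x] dist_range[OF DG, of x] by linarith done
    thus ?thesis unfolding bdd_above_def by (intro exI[of _ 1]) auto
  qed
  have ex: "\<And>x. \<bar>F x - G x\<bar> \<le> e" unfolding e_def sup_norm_def
    by (rule cSUP_upper[OF _ bdd]) auto
  have e0: "0 \<le> e" using ex[of 0] by linarith
  have gr: "\<And>y. -M \<le> y \<Longrightarrow> y \<le> M \<Longrightarrow> \<bar>F (VaR \<alpha> F + b * y) - \<alpha>\<bar> \<ge> \<bar>y\<bar>"
    using growth FM by auto
  define v where "v = VaR \<alpha> F"
  define w where "w = VaR \<alpha> G"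
  note FP = var_props[OF DF alpha] and GP = var_props[OF DG alpha]
  have up: "w \<le> v + b * e"
  proof -
    have "F v \<le> F (v + b * e)" using DF b e0 unfolding is_dist_fun_def mono_def by auto
    hence a: "\<alpha> \<le> F (v + b * e)" using FP(1) v_def by auto
    have "\<bar>F (v + b * e) - \<alpha>\<bar> \<ge> e" using gr[of e] e0 eM v_def by auto
    hence "F (v + b * e) \<ge> \<alpha> + e" using a by linarith
    hence "\<alpha> \<le> G (v + b * e)" using ex[of "v + b * e"] by linarith
    thus ?thesis using GP(3) w_def by auto
  qed
  have lo: "v - b * e \<le> w"
  proof (rule ccontr)
    assume "\<not> ?thesis"
    hence wl: "w < v - b * e" by simp
    have eq: "e < (v - w) / b" using wl b by (simp add: field_simps)
    obtain m where m1: "m \<le> (v - w) / b" and m2: "m \<le> M" and m3: "e < m"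
      using eq eM by (intro that[of "min M ((v - w) / b)"]) auto
    define y where "y = (e + m) / 2"
    have y1: "e < y" using m3 unfolding y_def by (auto simp: field_simps)
    have y2: "y \<le> M" using m2 m3 unfolding y_def by (auto simp: field_simps)
    have "y < m" using m3 unfolding y_def by (auto simp: field_simps)
    hence y3: "y < (v - w) / b" using m1 by (rule less_le_trans)
    have yM: "-M \<le> y" using y1 e0 eM by linarith
    have "v - b * y < v" using b y1 e0 by simp
    hence "F (v + b * (- y)) < \<alpha>" using FP(2) v_def by simp
    moreover have "\<bar>F (v + b * (- y)) - \<alpha>\<bar> \<ge> y" using gr[of "-y"] y2 yM v_def y1 e0 by auto
    ultimately have "F (v - b * y) \<le> \<alpha> - y" by simp
    hence "G (v - b * y) < \<alpha>" using ex[of "v - b * y"] y1 by linarith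
    moreover have "w < v - b * y" using y3 b by (simp add: field_simps)
    moreover have "G w \<le> G (v - b * y)"
      using DG \<open>w < v - b * y\<close> unfolding is_dist_fun_def mono_def by auto
    moreover have "\<alpha> \<le> G w" using GP(1) unfolding w_def .
    ultimately show False by linarith
  qed
  show "\<bar>VaR \<alpha> F - VaR \<alpha> G\<bar> \<le> b * sup_norm (\<lambda>x. F x - G x)"
    using up lo unfolding v_def w_def e_def by linarith
qed

end
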